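(* Assume $\theta_i<1$ for all $i$ and $\theta_j>0$ for some $j$. Then $\mathbf 1_n/n$ is an equilibrium social power of systems (A) and (B) (i.e. $F(\mathbf 1_n/n)=\mathbf 1_n/n$) if and only if $\Theta(I_n-\Theta)^{-1}\mathbf 1_n$ is a left eigenvector of $C$ with eigenvalue $1$, i.e. $C^T\Theta(I_n-\Theta)^{-1}\mathbf 1_n=\Theta(I_n-\Theta)^{-1}\mathbf 1_n$.
   Context: Let $n\ge 2$, $\mathbf 1_n$ the all-ones vector, $I_n$ the identity matrix, $\Delta_n=\{x\in\mathbb R^n: x\ge 0,\ \mathbf 1_n^Tx=1\}$. Let $C\in\mathbb R^{n\times n}$ be a nonnegative row-stochastic matrix with zero diagonal, $\theta=(\theta_1,\dots,\theta_n)\in[0,1]^n$, $\Theta=\mathrm{diag}(\theta)$, and for $x\in\mathbb R^n$, $W(x)=\mathrm{diag}(x)+(I_n-\mathrm{diag}(x))C$. System (A): $x(s+1)=F(x(s))$, $x(0)\in\Delta_n$, where $F(x)=(I_n-\Theta)(I_n-W(x)^T\Theta)^{-1}\mathbf 1_n/n$; an equilibrium is $x^*\in\Delta_n$ with $F(x^* )=x^*$. System (B): $V(k+1)=\Theta W(x(k))V(k)+I_n-\Theta$, $x(k+1)=V(k+1)^T\mathbf 1_n/n$, with $V(0)=I_n$, $x(0)\in\Delta_n$; an equilibrium is a pair $(V^*,x^* )$ with $V^*$ row-stochastic, $x^*\in\Delta_n$, $V^*=\Theta W(x^* )V^*+I_n-\Theta$, $x^*=(V^* )^T\mathbf 1_n/n$.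 The equilibrium social powers of (A) and (B) coincide (the fixed points of $F$). *)

theory Defs
  imports "HOL-Analysis.Analysis"
begin

definition ones :: "real ^ 'n" where "ones = (\<chi> i. 1)"

definition diagm :: "real ^ 'n \<Rightarrow> real ^ 'n ^ 'n" where
  "diagm x = (\<chi> i j. if i = j then x $ i else 0)"

definition row_stochastic :: "real ^ 'n ^ 'n \<Rightarrow> bool" where
  "row_stochastic C \<longleftrightarrow> (\<forall>i j. C $ i $ j \<ge> 0) \<and> (\<forall>i. (\<Sum>j\<in>UNIV. C $ i $ j) = 1)"

definition Wm :: "real ^ 'n ^ 'n \<Rightarrow> real ^ 'n \<Rightarrow> real ^ 'n ^ 'n" where
  "Wm C x = diagm x + (mat 1 - diagm x) ** C"

definition Fmap :: "real ^ 'n ^ 'n \<Rightarrow> real ^ 'n \<Rightarrow> real ^ 'n \<Rightarrow> real ^ 'n" where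
  "Fmap C \<theta> x = (mat 1 - diagm \<theta>) *v
     (matrix_inv (mat 1 - transpose (Wm C x) ** diagm \<theta>) *v ((1 / real CARD('n)) *\<^sub>R ones))"

end

theory Submission
  imports Defs
begin

lemma minv_props:
  fixes A :: "real^'n^'n"
  assumes "invertible A"
  shows "A ** matrix_inv A = mat 1" "matrix_inv A ** A = mat 1"
  using someI_ex[OF assms[unfolded invertible_def]] unfolding matrix_inv_def by auto

lemma minv_unique:
  fixes A B :: "real^'n^'n"
  assumes "A ** B = mat 1" "B ** A = mat 1"
  shows "matrix_inv A = B"
proof -
  have inv: "invertible A" using assms invertible_def by blast
  have "matrix_inv A = matrix_inv A ** (A ** B)" using assms by simp
  also have "\<dots> = B" by (simp add: matrix_mul_assoc minv_props(2)[OF inv])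
  finally show ?thesis .
qed

lemma diagm_mul: "(diagm a ** diagm b) = diagm (\<chi> i. a$i * b$i)"
  unfolding diagm_def matrix_matrix_mult_def
  by (simp add: vec_eq_iff if_distrib[of "\<lambda>x. x * _"] cong: if_cong)

lemma I_minus_diag: "mat 1 - diagm a = diagm (\<chi> i. 1 - a$i)"
  unfolding diagm_def mat_def by (simp add: vec_eq_iff)

lemma diagm_one: "diagm (\<chi> i. 1) = mat 1"
  unfolding diagm_def mat_def by (simp add: vec_eq_iff)

lemma diagm_v: "diagm a *v v = (\<chi> i. a$i * v$i)"
  unfolding diagm_def matrix_vector_mult_def
  by (simp add: vec_eq_iff if_distrib[of "\<lambda>x. x * _"] cong: if_cong)

lemma diag_inv:
  assumes "\<forall>i. a$i \<noteq> 0"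
  shows "matrix_inv (diagm a) = diagm (\<chi> i. 1 / a$i)"
  apply (rule minv_unique)
  using assms by (simp_all add: diagm_mul diagm_one[symmetric] vec_eq_iff)

lemma Wm_comp: "Wm C (c *\<^sub>R ones) $ i $ j = (if i = j then c else 0) + (1 - c) * C$i$j"
proof -
  have "\<And>k. ((if i = k then 1 else 0) - (if i = k then c else 0)) * C $ k $ j = (if i = k then (1-c)*C$k$j else 0)" by auto
  then show ?thesis
  unfolding Wm_def diagm_def ones_def matrix_matrix_mult_def mat_def
  by (simp add: if_distrib[of "\<lambda>x. x * _"] cong: if_cong)
qed

lemma M_comp: "(mat 1 - transpose W ** diagm t) $ i $ j = (if i = j then 1 else 0) - W$j$i * t$j"
proof -
  have "\<And>k. W $ k $ i * (if k = j then t $ k else 0) = (if k = j then W$j$i * t$j else 0)" by auto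
  then show ?thesis unfolding diagm_def matrix_matrix_mult_def mat_def transpose_def
    by simp
qed

lemma mv_comp: "(A *v v) $ i = (\<Sum>j\<in>UNIV. A$i$j * v$j)"
  by (simp add: matrix_vector_mult_def)

lemma Minj:
  fixes W :: "real^'n^'n" and t :: "real^'n"
  assumes Wnn: "\<forall>i j. W$i$j \<ge> 0" and Wrs: "\<forall>i. (\<Sum>j\<in>UNIV. W$i$j) = 1"
    and t: "\<forall>i. 0 \<le> t$i \<and> t$i < 1"
    and Mv: "(mat 1 - transpose W ** diagm t) *v v = 0"
  shows "v = 0"
proof -
  let ?M = "mat 1 - transpose W ** diagm t"
  have eq: "v$i = (\<Sum>j\<in>UNIV. W$j$i * t$j * v$j)" for i
  proof -
    have "0 = (?M *v v)$i" using Mv by simp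
    also have "\<dots> = (\<Sum>j\<in>UNIV. (if i = j then v$j else 0) - W$j$i * t$j * v$j)"
      unfolding mv_comp M_comp by (intro sum.cong) (auto simp: algebra_simps)
    also have "\<dots> = v$i - (\<Sum>j\<in>UNIV. W$j$i * t$j * v$j)"
      by (simp add: sum_subtractf)
    finally show ?thesis by simp
  qed
  have le: "\<bar>v$i\<bar> \<le> (\<Sum>j\<in>UNIV. W$j$i * t$j * \<bar>v$j\<bar>)" for i
  proof -
    have "\<bar>v$i\<bar> \<le> (\<Sum>j\<in>UNIV. \<bar>W$j$i * t$j * v$j\<bar>)"
      by (subst eq) (rule sum_abs)
    also have "\<dots> = (\<Sum>j\<in>UNIV. W$j$i * t$j * \<bar>v$j\<bar>)"
      using Wnn t by (intro sum.cong) (auto simp: abs_mult)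
    finally show ?thesis .
  qed
  have "(\<Sum>i\<in>UNIV. \<bar>v$i\<bar>) \<le> (\<Sum>i\<in>UNIV. \<Sum>j\<in>UNIV. W$j$i * t$j * \<bar>v$j\<bar>)"
    by (intro sum_mono le)
  also have "\<dots> = (\<Sum>j\<in>UNIV. \<Sum>i\<in>UNIV. W$j$i * t$j * \<bar>v$j\<bar>)"
    by (rule sum.swap)
  also have "\<dots> = (\<Sum>j\<in>UNIV. t$j * \<bar>v$j\<bar>)"
    using Wrs by (simp add: sum_distrib_right[symmetric])
  finally have "(\<Sum>j\<in>UNIV. (1 - t$j) * \<bar>v$j\<bar>) \<le> 0"
    by (simp add: algebra_simps sum_subtractf)
  moreover have nn: "\<forall>j\<in>UNIV. 0 \<le> (1 - t$j) * \<bar>v$j\<bar>" using t by (auto intro!: mult_nonneg_nonneg simp: less_imp_le)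
  ultimately have "(\<Sum>j\<in>UNIV. (1 - t$j) * \<bar>v$j\<bar>) = 0" using sum_nonneg[of UNIV] by (meson antisym)
  then have "\<forall>j\<in>UNIV. (1 - t$j) * \<bar>v$j\<bar> = 0" using sum_nonneg_eq_0_iff[of UNIV "\<lambda>j. (1 - t$j) * \<bar>v$j\<bar>"] nn by simp
  then have h: "(1 - t$j) * \<bar>v$j\<bar> = 0" for j by simp
  show ?thesis
  proof (rule vec_eq_iff[THEN iffD2], rule allI)
    fix j
    have "1 - t$j \<noteq> 0" using t by (metis less_irrefl eq_iff_diff_eq_0)
    then show "v$j = 0$j" using h[of j] by simp
  qed
qed

theorem corollary2:
  fixes C :: "real ^ 'n ^ 'n" and \<theta> :: "real ^ 'n"
  assumes "CARD('n) \<ge> 2"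
    and "row_stochastic C"
    and "\<forall>i. C $ i $ i = 0"
    and "\<forall>i. 0 \<le> \<theta> $ i \<and> \<theta> $ i \<le> 1"
    and "\<forall>i. \<theta> $ i < 1"
    and "\<exists>j. \<theta> $ j > 0"
  shows "Fmap C \<theta> ((1 / real CARD('n)) *\<^sub>R ones) = (1 / real CARD('n)) *\<^sub>R ones
     \<longleftrightarrow>
     transpose C *v ((diagm \<theta> ** matrix_inv (mat 1 - diagm \<theta>)) *v ones)
       = (diagm \<theta> ** matrix_inv (mat 1 - diagm \<theta>)) *v ones"
proof -
  define c where "c = 1 / real CARD('n)"
  have c0: "0 < c" and c1: "c < 1" unfolding c_def using assms(1) by auto
  define W where "W = Wm C (c *\<^sub>R ones)"
  define M where "M = mat 1 - transpose W ** diagm \<theta>"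
  define z where "z = (\<chi> i. \<theta>$i / (1 - \<theta>$i))"
  define y where "y = (\<chi> i. c / (1 - \<theta>$i))"
  have th: "\<forall>i. 0 \<le> \<theta>$i \<and> \<theta>$i < 1" using assms(4,5) by auto
  have th': "\<forall>i. 1 - \<theta>$i \<noteq> 0" using th by (metis eq_iff_diff_eq_0 less_irrefl)
  have Wc: "W$i$j = (if i = j then c else 0) + (1 - c) * C$i$j" for i j
    unfolding W_def by (rule Wm_comp)
  have Cnn: "C$i$j \<ge> 0" for i j using assms(2) unfolding row_stochastic_def by auto
  have Crs: "(\<Sum>j\<in>UNIV. C$i$j) = 1" for i using assms(2) unfolding row_stochastic_def by auto
  have Wnn: "\<forall>i j. W$i$j \<ge> 0" using c0 c1 Cnn by (auto simp: Wc)
  have Wrs: "\<forall>i. (\<Sum>j\<in>UNIV. W$i$j) = 1"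
  proof
    fix i
    have "(\<Sum>j\<in>UNIV. W$i$j) = (\<Sum>j\<in>UNIV. (if i = j then c else 0)) + (1 - c) * (\<Sum>j\<in>UNIV. C$i$j)"
      by (simp add: Wc sum.distrib sum_distrib_left)
    then show "(\<Sum>j\<in>UNIV. W$i$j) = 1" using Crs by simp
  qed
  have Minv: "invertible M"
  proof -
    have "\<forall>v. M *v v = 0 \<longrightarrow> v = 0" unfolding M_def using Minj[OF Wnn Wrs th] by blast
    then show ?thesis using matrix_left_invertible_ker invertible_left_inverse by blast
  qed
  note th' = th'
  have rhs: "(diagm \<theta> ** matrix_inv (mat 1 - diagm \<theta>)) *v ones = z"
  proof -
    have "matrix_inv (mat 1 - diagm \<theta>) = diagm (\<chi> i. 1 / (1 - \<theta>$i))"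
      unfolding I_minus_diag using th' by (subst diag_inv) auto
    then show ?thesis by (simp add: diagm_mul diagm_v z_def ones_def)
  qed
  have F: "Fmap C \<theta> (c *\<^sub>R ones) = diagm (\<chi> i. 1 - \<theta>$i) *v (matrix_inv M *v (c *\<^sub>R ones))"
    unfolding Fmap_def M_def W_def c_def I_minus_diag ..
  have step1: "Fmap C \<theta> (c *\<^sub>R ones) = c *\<^sub>R ones \<longleftrightarrow> matrix_inv M *v (c *\<^sub>R ones) = y"
    unfolding F diagm_v y_def using th' by (auto simp: vec_eq_iff ones_def field_simps)
  have step2: "matrix_inv M *v (c *\<^sub>R ones) = y \<longleftrightarrow> M *v y = c *\<^sub>R ones"
    using minv_props[OF Minv]
    by (metis matrix_vector_mul_assoc matrix_vector_mul_lid)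
  have step3: "(M *v y) $ i = c \<longleftrightarrow> (transpose C *v z) $ i = z $ i" for i
  proof -
    have S: "(M *v y) $ i = c / (1 - \<theta>$i) - c * c * z$i - c * (1 - c) * (transpose C *v z) $ i"
    proof -
      have "(M *v y) $ i = (\<Sum>j\<in>UNIV. (if i = j then y$j else 0) - W$j$i * \<theta>$j * y$j)"
        unfolding mv_comp M_def M_comp by (intro sum.cong) (auto simp: algebra_simps)
      also have "\<dots> = y$i - (\<Sum>j\<in>UNIV. W$j$i * \<theta>$j * y$j)"
        by (simp add: sum_subtractf)
      also have "(\<Sum>j\<in>UNIV. W$j$i * \<theta>$j * y$j) = (\<Sum>j\<in>UNIV. (if j = i then c * c * z$j else 0) + c * (1 - c) * (C$j$i * z$j))"
        using th' by (intro sum.cong) (auto simp: Wc y_def z_def field_simps)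
      also have "\<dots> = c * c * z$i + c * (1 - c) * (transpose C *v z) $ i"
        by (simp add: sum.distrib sum_distrib_left[symmetric] mv_comp transpose_def)
      finally show ?thesis by (simp add: y_def)
    qed
    have zi: "z$i = 1 / (1 - \<theta>$i) - 1" using th'[rule_format, of i] unfolding z_def by (simp add: field_simps)
    have "(M *v y) $ i = c \<longleftrightarrow> c * (1 - c) * z$i - c * (1 - c) * (transpose C *v z) $ i = 0"
      proof -
      have cz: "c / (1 - \<theta>$i) = c + c * z$i" using th'[rule_format, of i] unfolding z_def by (simp add: field_simps)
      show ?thesis unfolding S cz by (simp add: algebra_simps)
    qed
    also have "\<dots> \<longleftrightarrow> (c * (1 - c)) * (z$i - (transpose C *v z) $ i) = 0"
      by (simp add: algebra_simps)
    also have "\<dots> \<longleftrightarrow> (transpose C *v z) $ i = z $ i" using c0 c1 by auto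
    finally show ?thesis .
  qed
  show ?thesis
    unfolding rhs c_def[symmetric] step1 step2 using step3 by (auto simp: vec_eq_iff ones_def)
qed

end
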